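(* Let $(X,G)$ be a dislocation space with $X$ a reflexive Banach space, and let $(u_n)$ be a bounded sequence in $X$. Let $L\in\mathbb{N}_0$, and let sequences $(g^{(l)}_n)_n\subset G$ and elements $w^{(l)}\in X$ ($l=0,\dots,L$) satisfy $g^{(0)}_n=\mathrm{Id}_X$, $(g^{(l)}_n)^{-1}u_n\to w^{(l)}$ weakly in $X$ for $l=0,\dots,L$, and $(g^{(l)}_n)^{-1}g^{(m)}_n\rightharpoonup 0$ operator-weakly whenever $0\le l<m\le L$, as $n\to\infty$. Assume there is a sequence $(g^{(L+1)}_n)\subset G$ such that, along a subsequence, $$(g^{(L+1)}_n)^{-1}\Big(u_n-\sum_{l=0}^L g^{(l)}_nw^{(l)}\Big)\to w^{(L+1)}\neq0\quad\text{weakly in }X.$$ Then, along this subsequence, $(g^{(l)}_n)^{-1}g^{(L+1)}_n\rightharpoonup0$ operator-weakly as $n\to\infty$ for every $l=0,\dots,L$.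
   Context: Dislocation space: a Banach space $X$ with a group $G\subset\mathcal{B}(X)$ (under composition) of bijective linear isometries such that (1) every $(g_n)\subset G$ with $g_n\not\rightharpoonup0$ has an operator-strongly convergent subsequence (limit in $\mathcal{B}(X)$), and (2) for every $(g_n)\subset G$ with $g_n\not\rightharpoonup0$ and every $(u_n)\subset X$ with $u_n\to0$ weakly, there is a subsequence with $g_{n_j}u_{n_j}\to0$ weakly. Here $A_n\rightharpoonup A$ (operator-weakly) means $A_nu\to Au$ weakly for all $u\in X$, and operator-strong convergence means $A_nu\to Au$ in norm for all $u$. *)

theory Defs
  imports "HOL-Analysis.Analysis"
begin

definition weak_conv :: "(nat \<Rightarrow> 'a::real_normed_vector) \<Rightarrow> 'a \<Rightarrow> bool" where
  "weak_conv xs x \<longleftrightarrow> (\<forall>f :: 'a \<Rightarrow>\<^sub>L real. (\<lambda>n. f (xs n)) \<longlonglongrightarrow> f x)"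

definition op_weak_conv :: "(nat \<Rightarrow> 'a \<Rightarrow> 'a::real_normed_vector) \<Rightarrow> ('a \<Rightarrow> 'a) \<Rightarrow> bool" where
  "op_weak_conv As A \<longleftrightarrow> (\<forall>u. weak_conv (\<lambda>n. As n u) (A u))"

definition op_strong_conv :: "(nat \<Rightarrow> 'a \<Rightarrow> 'a::real_normed_vector) \<Rightarrow> ('a \<Rightarrow> 'a) \<Rightarrow> bool" where
  "op_strong_conv As A \<longleftrightarrow> (\<forall>u. (\<lambda>n. As n u) \<longlonglongrightarrow> A u)"

definition reflexive_space :: "'a::real_normed_vector itself \<Rightarrow> bool" where
  "reflexive_space TYPE('a) \<longleftrightarrow>
     (\<forall>F :: ('a \<Rightarrow>\<^sub>L real) \<Rightarrow>\<^sub>L real. \<exists>x::'a. \<forall>f :: 'a \<Rightarrow>\<^sub>L real. blinfun_apply F f = blinfun_apply f x)"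

definition op_inv :: "('a::real_normed_vector \<Rightarrow>\<^sub>L 'a) \<Rightarrow> 'a \<Rightarrow> 'a" where
  "op_inv g = inv (blinfun_apply g)"

definition isometry_group :: "('a::real_normed_vector \<Rightarrow>\<^sub>L 'a) set \<Rightarrow> bool" where
  "isometry_group G \<longleftrightarrow>
     id_blinfun \<in> G \<and>
     (\<forall>g\<in>G. \<forall>h\<in>G. g o\<^sub>L h \<in> G) \<and>
     (\<forall>g\<in>G. \<exists>h\<in>G. g o\<^sub>L h = id_blinfun \<and> h o\<^sub>L g = id_blinfun) \<and>
     (\<forall>g\<in>G. bij (blinfun_apply g) \<and> (\<forall>x. norm (g x) = norm x))"

definition dislocation_space :: "('a::banach \<Rightarrow>\<^sub>L 'a) set \<Rightarrow> bool" where
  "dislocation_space G \<longleftrightarrow>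
     isometry_group G \<and>
     (\<forall>gs. (\<forall>n. gs n \<in> G) \<and> \<not> op_weak_conv (\<lambda>n. blinfun_apply (gs n)) (\<lambda>_. 0) \<longrightarrow>
        (\<exists>r A. strict_mono r \<and> op_strong_conv (\<lambda>n. blinfun_apply (gs (r n))) (blinfun_apply A))) \<and>
     (\<forall>gs us. (\<forall>n. gs n \<in> G) \<and> \<not> op_weak_conv (\<lambda>n. blinfun_apply (gs n)) (\<lambda>_. 0)
        \<and> weak_conv us 0 \<longrightarrow>
        (\<exists>r. strict_mono r \<and> weak_conv (\<lambda>n. gs (r n) (us (r n))) 0))"

end

theory Submission
  imports Defs
begin


definition hb_ok :: "'a::real_normed_vector \<Rightarrow> ('a \<times> real) set \<Rightarrow> bool" where
  "hb_ok x0 R \<longleftrightarrow> (\<forall>a b c. (a,b)\<in>R \<longrightarrow> (a,c)\<in>R \<longrightarrow> b = c) \<and> (0,0) \<in> R \<and>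
     (\<forall>a b c d. (a,b)\<in>R \<longrightarrow> (c,d)\<in>R \<longrightarrow> (a+c,b+d)\<in>R) \<and>
     (\<forall>a b t. (a,b)\<in>R \<longrightarrow> (t *\<^sub>R a, t*b)\<in>R) \<and>
     (\<forall>a b. (a,b)\<in>R \<longrightarrow> b \<le> norm a) \<and> (x0, norm x0) \<in> R"

lemma hb_init:
  fixes x0 :: "'a::real_normed_vector"
  assumes "x0 \<noteq> 0"
  shows "hb_ok x0 {(t *\<^sub>R x0, t * norm x0) | t. True}"
proof -
  have u: "t = s" if "t *\<^sub>R x0 = s *\<^sub>R x0" for t s
    using that assms by (metis scaleR_cancel_right)
  have d: "t * norm x0 \<le> norm (t *\<^sub>R x0)" for t
    by (simp add: mult_right_mono)
  show ?thesis unfolding hb_ok_def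
    apply (intro conjI)
    using u apply blast
         apply (rule CollectI, rule exI[of _ 0], simp)
        apply clarify
        apply (metis (mono_tags, lifting) scaleR_add_left distrib_right)
       apply clarify
       apply (metis (mono_tags, lifting) scaleR_scaleR mult.assoc)
      using d apply blast
     apply (rule CollectI, rule exI[of _ 1], simp)
    done
qed

lemma hb_chain:
  fixes x0 :: "'a::real_normed_vector"
  assumes "x0 \<noteq> 0"
  shows "\<forall>C\<in>chains {R. hb_ok x0 R}. \<exists>U\<in>{R. hb_ok x0 R}. \<forall>X\<in>C. X \<subseteq> U"
proof
  fix C assume C: "C \<in> chains {R. hb_ok x0 R}"
  show "\<exists>U\<in>{R. hb_ok x0 R}. \<forall>X\<in>C. X \<subseteq> U"
  proof (cases "C = {}")
    case True
    then show ?thesis using hb_init[OF assms] by blast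
  next
    case False
    have ok: "\<And>R. R \<in> C \<Longrightarrow> hb_ok x0 R" and ch: "\<And>A B. A\<in>C \<Longrightarrow> B\<in>C \<Longrightarrow> A \<subseteq> B \<or> B \<subseteq> A"
      using C unfolding chains_def chain_subset_def by auto
    have two: "\<exists>R\<in>C. p \<in> R \<and> q \<in> R" if "p \<in> \<Union>C" "q \<in> \<Union>C" for p q
      using that ch by blast
    have "hb_ok x0 (\<Union>C)" unfolding hb_ok_def
    proof (intro conjI allI impI)
      fix a b c assume "(a,b) \<in> \<Union>C" "(a,c) \<in> \<Union>C"
      then obtain R where "R\<in>C" "(a,b)\<in>R" "(a,c)\<in>R" using two by blast
      then show "b = c" using ok unfolding hb_ok_def by blast
    next
      show "(0,0) \<in> \<Union>C" using False ok unfolding hb_ok_def by blast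
    next
      fix a b c d assume "(a,b) \<in> \<Union>C" "(c,d) \<in> \<Union>C"
      then obtain R where "R\<in>C" "(a,b)\<in>R" "(c,d)\<in>R" using two by blast
      then show "(a+c,b+d) \<in> \<Union>C" using ok unfolding hb_ok_def by blast
    next
      fix a b t assume "(a,b) \<in> \<Union>C"
      then show "(t *\<^sub>R a, t*b) \<in> \<Union>C" using ok unfolding hb_ok_def by blast
    next
      fix a b assume "(a,b) \<in> \<Union>C"
      then show "b \<le> norm a" using ok unfolding hb_ok_def by blast
    next
      show "(x0, norm x0) \<in> \<Union>C" using False ok unfolding hb_ok_def by blast
    qed
    then show ?thesis by blast
  qed
qed

lemma hb_extend:
  fixes x0 :: "'a::real_normed_vector"
  assumes ok: "hb_ok x0 M" and y: "y \<notin> Domain M"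
  shows "\<exists>M'. hb_ok x0 M' \<and> M \<subseteq> M' \<and> M' \<noteq> M"
proof -
  have fn: "\<And>a b c. (a,b)\<in>M \<Longrightarrow> (a,c)\<in>M \<Longrightarrow> b = c"
    and z: "(0,0) \<in> M"
    and add: "\<And>a b c d. (a,b)\<in>M \<Longrightarrow> (c,d)\<in>M \<Longrightarrow> (a+c,b+d)\<in>M"
    and sc: "\<And>a b t. (a,b)\<in>M \<Longrightarrow> (t *\<^sub>R a, t*b)\<in>M"
    and dom: "\<And>a b. (a,b)\<in>M \<Longrightarrow> b \<le> norm a"
    and x0: "(x0, norm x0) \<in> M"
    using ok unfolding hb_ok_def by blast+
  define S where "S = {b - norm (a - y) | a b. (a,b) \<in> M}"
  define c where "c = Sup S"
  have key: "b - norm (a - y) \<le> norm (a' + y) - b'" if "(a,b)\<in>M" "(a',b')\<in>M" for a b a' b'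
  proof -
    have "b + b' \<le> norm (a + a')" using dom[OF add[OF that]] .
    also have "a + a' = (a - y) + (a' + y)" by simp
    also have "norm \<dots> \<le> norm (a - y) + norm (a' + y)" by (rule norm_triangle_ineq)
    finally show ?thesis by simp
  qed
  have Sne: "S \<noteq> {}" using z unfolding S_def by blast
  have c_up: "b - norm (a - y) \<le> c" if "(a,b)\<in>M" for a b
  proof -
    have "bdd_above S" unfolding S_def bdd_above_def using key z by fastforce
    then show ?thesis unfolding c_def using that by (auto intro!: cSup_upper simp: S_def)
  qed
  have c_lo: "c \<le> norm (a' + y) - b'" if "(a',b')\<in>M" for a' b'
    unfolding c_def using Sne key that by (auto intro!: cSup_least simp: S_def)
  define M' where "M' = {(a + t *\<^sub>R y, b + t * c) | a b t. (a,b) \<in> M}"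
  have yM: "a \<noteq> t *\<^sub>R y" if "(a,b) \<in> M" "t \<noteq> 0" for a b t
  proof
    assume "a = t *\<^sub>R y"
    then have "((1/t) *\<^sub>R a, (1/t)*b) \<in> M" using sc that by blast
    moreover have "(1/t) *\<^sub>R a = y" using \<open>a = t *\<^sub>R y\<close> that by simp
    ultimately show False using y by blast
  qed
  have fn': "b1 + t1 * c = b2 + t2 * c" if "(a1,b1)\<in>M" "(a2,b2)\<in>M" "a1 + t1 *\<^sub>R y = a2 + t2 *\<^sub>R y" for a1 b1 a2 b2 t1 t2
  proof -
    have m: "(a1 + (-1) *\<^sub>R a2, b1 + (-1) * b2) \<in> M" using add[OF that(1) sc[OF that(2)]] .
    have e1: "a1 = a2 + t2 *\<^sub>R y - t1 *\<^sub>R y" using that(3) by (metis add_diff_cancel_right')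
    have "a1 + (-1) *\<^sub>R a2 = (t2 - t1) *\<^sub>R y" unfolding e1 by (simp add: scaleR_diff_left)
    then have "t2 - t1 = 0" using yM[OF m] by blast
    then have "t2 = t1" by simp
    then have "a1 = a2" using that(3) by simp
    then have "b1 = b2" using fn that by blast
    then show ?thesis using \<open>t2 = t1\<close> by simp
  qed
  have dom': "b + t * c \<le> norm (a + t *\<^sub>R y)" if "(a,b)\<in>M" for a b t
  proof (cases "t = 0")
    case True then show ?thesis using dom that by simp
  next
    case False
    show ?thesis
    proof (cases "t > 0")
      case True
      have m: "((1/t) *\<^sub>R a, (1/t)*b) \<in> M" using sc that by blast
      have "c \<le> norm ((1/t) *\<^sub>R a + y) - (1/t)*b" using c_lo[OF m] .
      also have "(1/t) *\<^sub>R a + y = (1/t) *\<^sub>R (a + t *\<^sub>R y)" using True by (simp add: algebra_simps)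
      also have "norm \<dots> = (1/t) * norm (a + t *\<^sub>R y)" using True by simp
      finally have "t * c \<le> t * ((1/t) * norm (a + t *\<^sub>R y) - (1/t)*b)" using True by simp
      also have "\<dots> = norm (a + t *\<^sub>R y) - b" using True by (simp add: algebra_simps)
      finally show ?thesis by simp
    next
      case nt: False
      define s where "s = - t"
      have s: "s > 0" using nt False unfolding s_def by simp
      have m: "((1/s) *\<^sub>R a, (1/s)*b) \<in> M" using sc that by blast
      have "(1/s)*b - norm ((1/s) *\<^sub>R a - y) \<le> c" using c_up[OF m] .
      also have "(1/s) *\<^sub>R a - y = (1/s) *\<^sub>R (a + t *\<^sub>R y)" using s by (simp add: s_def algebra_simps)
      also have "norm \<dots> = (1/s) * norm (a + t *\<^sub>R y)" using s by simp
      finally have "s * ((1/s)*b - (1/s) * norm (a + t *\<^sub>R y)) \<le> s * c" using s by simp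
      then have "b - norm (a + t *\<^sub>R y) \<le> s * c" using s by (simp add: algebra_simps)
      then show ?thesis unfolding s_def by simp
    qed
  qed
  have "hb_ok x0 M'" unfolding hb_ok_def M'_def
  proof (intro conjI allI impI)
    fix a b d
    assume "(a, b) \<in> {(a + t *\<^sub>R y, b + t * c) |a b t. (a, b) \<in> M}"
      "(a, d) \<in> {(a + t *\<^sub>R y, b + t * c) |a b t. (a, b) \<in> M}"
    then show "b = d" using fn' by blast
  next
    show "(0, 0) \<in> {(a + t *\<^sub>R y, b + t * c) |a b t. (a, b) \<in> M}"
      using z by (auto intro!: exI[of _ 0])
  next
    fix a b a' b'
    assume "(a, b) \<in> {(a + t *\<^sub>R y, b + t * c) |a b t. (a, b) \<in> M}"
      "(a', b') \<in> {(a + t *\<^sub>R y, b + t * c) |a b t. (a, b) \<in> M}"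
    then obtain p q t p' q' t' where "(p,q)\<in>M" "(p',q')\<in>M" "a = p + t *\<^sub>R y" "b = q + t*c"
       "a' = p' + t' *\<^sub>R y" "b' = q' + t'*c" by blast
    moreover have "(p+p', q+q') \<in> M" using add \<open>(p,q)\<in>M\<close> \<open>(p',q')\<in>M\<close> by blast
    moreover have "a + a' = (p+p') + (t+t') *\<^sub>R y" "b + b' = (q+q') + (t+t')*c"
      using calculation by (simp_all add: scaleR_add_left algebra_simps)
    ultimately show "(a + a', b + b') \<in> {(a + t *\<^sub>R y, b + t * c) |a b t. (a, b) \<in> M}"
      by blast
  next
    fix a b s
    assume "(a, b) \<in> {(a + t *\<^sub>R y, b + t * c) |a b t. (a, b) \<in> M}"
    then obtain p q t where "(p,q)\<in>M" "a = p + t *\<^sub>R y" "b = q + t*c" by blast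
    moreover have "(s *\<^sub>R p, s*q) \<in> M" using sc \<open>(p,q)\<in>M\<close> by blast
    moreover have "s *\<^sub>R a = s *\<^sub>R p + (s*t) *\<^sub>R y" "s * b = s*q + (s*t)*c"
      using calculation by (simp_all add: scaleR_add_right algebra_simps)
    ultimately show "(s *\<^sub>R a, s * b) \<in> {(a + t *\<^sub>R y, b + t * c) |a b t. (a, b) \<in> M}"
      by blast
  next
    fix a b
    assume "(a, b) \<in> {(a + t *\<^sub>R y, b + t * c) |a b t. (a, b) \<in> M}"
    then show "b \<le> norm a" using dom' by blast
  next
    show "(x0, norm x0) \<in> {(a + t *\<^sub>R y, b + t * c) |a b t. (a, b) \<in> M}"
    proof -
      have "x0 = x0 + 0 *\<^sub>R y" "norm x0 = norm x0 + 0 * c" by simp_all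
      then show ?thesis using x0 by blast
    qed
  qed
  moreover have "M \<subseteq> M'" unfolding M'_def by (force intro: exI[of _ 0])
  moreover have "(y, c) \<in> M'" unfolding M'_def
  proof -
    have "y = 0 + 1 *\<^sub>R y" "c = 0 + 1 * c" by simp_all
    then show "(y, c) \<in> {(a + t *\<^sub>R y, b + t * c) |a b t. (a, b) \<in> M}" using z by blast
  qed
  then have "M' \<noteq> M" using y by blast
  ultimately show ?thesis by blast
qed

lemma hahn_banach_sep:
  fixes x0 :: "'a::real_normed_vector"
  assumes "x0 \<noteq> 0"
  shows "\<exists>f :: 'a \<Rightarrow>\<^sub>L real. f x0 \<noteq> 0"
proof -
  obtain M where M: "hb_ok x0 M" and max: "\<And>X. hb_ok x0 X \<Longrightarrow> M \<subseteq> X \<Longrightarrow> X = M"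
    using Zorn_Lemma2[OF hb_chain[OF assms]] by blast
  have fn: "\<And>a b c. (a,b)\<in>M \<Longrightarrow> (a,c)\<in>M \<Longrightarrow> b = c"
    and add: "\<And>a b c d. (a,b)\<in>M \<Longrightarrow> (c,d)\<in>M \<Longrightarrow> (a+c,b+d)\<in>M"
    and sc: "\<And>a b t. (a,b)\<in>M \<Longrightarrow> (t *\<^sub>R a, t*b)\<in>M"
    and dom: "\<And>a b. (a,b)\<in>M \<Longrightarrow> b \<le> norm a"
    and x0: "(x0, norm x0) \<in> M"
    using M unfolding hb_ok_def by blast+
  have all: "y \<in> Domain M" for y
    using hb_extend[OF M, of y] max by blast
  define f where "f y = (THE b. (y,b) \<in> M)" for y
  have fM: "(y, f y) \<in> M" for y
    unfolding f_def using all[of y] fn by (metis DomainE theI)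
  have fe: "f y = b" if "(y,b)\<in>M" for y b using fn[OF that fM] by simp
  have fadd: "f (a + b) = f a + f b" for a b using fe[OF add[OF fM fM]] .
  have fsc: "f (t *\<^sub>R a) = t * f a" for t a using fe[OF sc[OF fM]] .
  have lin: "linear f" by (rule linearI) (auto simp: fadd fsc)
  have bnd: "norm (f x) \<le> norm x * 1" for x
  proof -
    have "f x \<le> norm x" using dom[OF fM] .
    moreover have "- f x \<le> norm x" using dom[OF fM, of "-x"] fsc[of "-1" x] by simp
    ultimately show ?thesis by simp
  qed
  have bl: "bounded_linear f" using lin bnd by (auto intro: bounded_linear_intro[of f 1] simp: fadd fsc)
  have "f x0 = norm x0" using fe[OF x0] .
  then have "blinfun_apply (Blinfun f) x0 \<noteq> 0" using bounded_linear_Blinfun_apply[OF bl] assms by simp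
  then show ?thesis by blast
qed

lemma wc_subseq: "weak_conv x a \<Longrightarrow> strict_mono r \<Longrightarrow> weak_conv (\<lambda>n. x (r n)) a"
  unfolding weak_conv_def using LIMSEQ_subseq_LIMSEQ unfolding o_def by blast

lemma wc_const: "weak_conv (\<lambda>n. a) a"
  unfolding weak_conv_def by simp

lemma wc_diff: "weak_conv x a \<Longrightarrow> weak_conv y b \<Longrightarrow> weak_conv (\<lambda>n. x n - y n) (a - b)"
  unfolding weak_conv_def by (auto simp: blinfun.diff_right intro: tendsto_diff)

lemma wc_sum: "finite I \<Longrightarrow> (\<And>i. i\<in>I \<Longrightarrow> weak_conv (x i) (a i)) \<Longrightarrow>
   weak_conv (\<lambda>n. \<Sum>i\<in>I. x i n) (\<Sum>i\<in>I. a i)"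
  unfolding weak_conv_def by (auto simp: blinfun.sum_right intro: tendsto_sum)

lemma wc_unique:
  fixes x :: "nat \<Rightarrow> 'a::real_normed_vector"
  assumes "weak_conv x a" "weak_conv x b" shows "a = b"
proof (rule ccontr)
  assume "a \<noteq> b"
  then obtain f :: "'a \<Rightarrow>\<^sub>L real" where f: "f (a - b) \<noteq> 0" using hahn_banach_sep[of "a - b"] by auto
  have "f a = f b" using assms unfolding weak_conv_def by (meson LIMSEQ_unique)
  then show False using f by (simp add: blinfun.diff_right)
qed

lemma gi_ex:
  fixes G :: "('a::real_normed_vector \<Rightarrow>\<^sub>L 'a) set"
    and g :: "'a \<Rightarrow>\<^sub>L 'a"
  assumes "isometry_group G" "g \<in> G"
  shows "\<exists>h::'a\<Rightarrow>\<^sub>L'a. h\<in>G \<and> (\<forall>x. g (h x) = x) \<and> (\<forall>x. h (g x) = x) \<and> blinfun_apply h = op_inv g"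
proof -
  obtain h where h: "h \<in> G" "g o\<^sub>L h = id_blinfun" "h o\<^sub>L g = id_blinfun"
    using assms unfolding isometry_group_def by blast
  have 1: "g (h x) = x" for x using h(2) by (metis blinfun_apply_blinfun_compose blinfun_apply_id_blinfun id_apply)
  have 2: "h (g x) = x" for x using h(3) by (metis blinfun_apply_blinfun_compose blinfun_apply_id_blinfun id_apply)
  have "op_inv g = blinfun_apply h" unfolding op_inv_def by (rule inv_equality) (use 1 2 in auto)
  then show ?thesis using h 1 2 by auto
qed

lemma inv_lemma:
  fixes G :: "('a::banach \<Rightarrow>\<^sub>L 'a) set"
  assumes ds: "dislocation_space G"
    and gG: "\<And>n. gs n \<in> G" and hG: "\<And>n. hs n \<in> G"
    and gh: "\<And>n x. gs n (hs n x) = x"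
    and wc: "op_weak_conv (\<lambda>n. blinfun_apply (gs n)) (\<lambda>_. 0)"
  shows "op_weak_conv (\<lambda>n. blinfun_apply (hs n)) (\<lambda>_. 0)"
proof (rule ccontr)
  assume nc: "\<not> op_weak_conv (\<lambda>n. blinfun_apply (hs n)) (\<lambda>_. 0)"
  have iso: "\<And>n x. norm (gs n x) = norm x" using ds gG unfolding dislocation_space_def isometry_group_def by blast
  have p1: "\<forall>gs. (\<forall>n. gs n \<in> G) \<and> \<not> op_weak_conv (\<lambda>n. blinfun_apply (gs n)) (\<lambda>_. 0) \<longrightarrow>
        (\<exists>r A. strict_mono r \<and> op_strong_conv (\<lambda>n. blinfun_apply (gs (r n))) (blinfun_apply A))"
    using ds unfolding dislocation_space_def by blast
  obtain q A where q: "strict_mono q" and sc: "op_strong_conv (\<lambda>n. blinfun_apply (hs (q n))) (blinfun_apply A)"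
    using p1 hG nc by blast
  have zero: "f x = 0" for f :: "'a \<Rightarrow>\<^sub>L real" and x
  proof -
    define d where "d n = hs (q n) x - A x" for n
    have d0: "d \<longlonglongrightarrow> 0" using sc unfolding op_strong_conv_def d_def
      using LIM_zero by blast
    have t1: "(\<lambda>n. f (gs (q n) (A x))) \<longlonglongrightarrow> 0"
    proof -
      have "weak_conv (\<lambda>n. gs n (A x)) 0" using wc unfolding op_weak_conv_def by simp
      then have "weak_conv (\<lambda>n. gs (q n) (A x)) 0" using wc_subseq q by blast
      then show ?thesis unfolding weak_conv_def by (metis blinfun.zero_right)
    qed
    have t2: "(\<lambda>n. f (gs (q n) (d n))) \<longlonglongrightarrow> 0"
    proof (rule Lim_null_comparison)
      have "norm (f (gs (q n) (d n))) \<le> norm f * norm (d n)" for n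
      proof -
        have "norm (f (gs (q n) (d n))) \<le> norm f * norm (gs (q n) (d n))" by (rule norm_blinfun)
        then show ?thesis by (simp only: iso)
      qed
      then show "\<forall>\<^sub>F n in sequentially. norm (f (gs (q n) (d n))) \<le> norm f * norm (d n)"
        by (intro always_eventually allI)
      have "(\<lambda>n. norm (d n)) \<longlonglongrightarrow> 0" using d0 by (rule tendsto_norm_zero)
      then show "(\<lambda>n. norm f * norm (d n)) \<longlonglongrightarrow> 0"
        using tendsto_mult[OF tendsto_const[of "norm f"]] by fastforce
    qed
    have eq: "f (gs (q n) (A x)) + f (gs (q n) (d n)) = f x" for n
    proof -
      have "x = gs (q n) (A x) + gs (q n) (d n)"
        unfolding d_def by (simp add: blinfun.diff_right gh)
      then show ?thesis by (metis blinfun.add_right)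
    qed
    have "(\<lambda>n. f (gs (q n) (A x)) + f (gs (q n) (d n))) \<longlonglongrightarrow> 0 + 0" by (rule tendsto_add[OF t1 t2])
    then have "(\<lambda>n. f x) \<longlonglongrightarrow> 0 + 0" by (simp only: eq)
    then show "f x = 0" by (simp add: LIMSEQ_const_iff)
  qed
  have "op_weak_conv (\<lambda>n. blinfun_apply (hs n)) (\<lambda>_. 0)"
    unfolding op_weak_conv_def weak_conv_def by (simp add: zero)
  then show False using nc by blast
qed


theorem mainTheorem6:
  fixes G :: "('a::banach \<Rightarrow>\<^sub>L 'a) set"
    and u :: "nat \<Rightarrow> 'a"
    and L :: nat
    and g :: "nat \<Rightarrow> nat \<Rightarrow> ('a \<Rightarrow>\<^sub>L 'a)"
    and w :: "nat \<Rightarrow> 'a"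
    and r :: "nat \<Rightarrow> nat"
  assumes "dislocation_space G"
    and "reflexive_space TYPE('a)"
    and "bounded (range u)"
    and "\<And>l n. l \<le> L + 1 \<Longrightarrow> g l n \<in> G"
    and "\<And>n. g 0 n = id_blinfun"
    and "\<And>l. l \<le> L \<Longrightarrow> weak_conv (\<lambda>n. op_inv (g l n) (u n)) (w l)"
    and "\<And>l m. l < m \<Longrightarrow> m \<le> L \<Longrightarrow>
           op_weak_conv (\<lambda>n. op_inv (g l n) \<circ> blinfun_apply (g m n)) (\<lambda>_. 0)"
    and "strict_mono r"
    and "weak_conv (\<lambda>n. op_inv (g (L + 1) (r n))
           (u (r n) - (\<Sum>l\<le>L. g l (r n) (w l)))) (w (L + 1))"
    and "w (L + 1) \<noteq> 0"
  shows "\<forall>l\<le>L. op_weak_conv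
           (\<lambda>n. op_inv (g l (r n)) \<circ> blinfun_apply (g (L + 1) (r n))) (\<lambda>_. 0)"
  
proof (intro allI impI)
  fix l assume lL: "l \<le> L"
  note ds = assms(1)
  have ig: "isometry_group G" using ds unfolding dislocation_space_def by blast
  have comp: "\<And>a b. a \<in> G \<Longrightarrow> b \<in> G \<Longrightarrow> a o\<^sub>L b \<in> G" using ig unfolding isometry_group_def by blast
  obtain gi where gi: "\<And>g. g \<in> G \<Longrightarrow> gi g \<in> G \<and> (\<forall>x. g (gi g x) = x) \<and> (\<forall>x. gi g (g x) = x) \<and> blinfun_apply (gi g) = op_inv g"
    using gi_ex[OF ig] by metis
  have gG: "\<And>m n. m \<le> L + 1 \<Longrightarrow> g m n \<in> G" using assms(4) by blast
  have giG: "\<And>m n. m \<le> L + 1 \<Longrightarrow> gi (g m n) \<in> G" using gi gG by blast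
  have gig: "\<And>m n x. m \<le> L + 1 \<Longrightarrow> gi (g m n) (g m n x) = x" using gi gG by blast
  have ggi: "\<And>m n x. m \<le> L + 1 \<Longrightarrow> g m n (gi (g m n) x) = x" using gi gG by blast
  have opi: "\<And>m n. m \<le> L + 1 \<Longrightarrow> op_inv (g m n) = blinfun_apply (gi (g m n))" using gi gG by metis
  have lL1: "l \<le> L + 1" using lL by simp
  have gigl: "\<And>n x. gi (g l n) (g l n x) = x" using gig[OF lL1] .
  have ggil: "\<And>n x. g l n (gi (g l n) x) = x" using ggi[OF lL1] .
  have ggiL: "\<And>n x. g (L+1) n (gi (g (L+1) n) x) = x" using ggi[of "L+1"] by simp
  have gigL: "\<And>n x. gi (g (L+1) n) (g (L+1) n x) = x" using gig[of "L+1"] by simp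
  have gigS: "\<And>n x. gi (g (Suc L) n) (g (Suc L) n x) = x" using gig[of "L+1"] by simp
  have ggiS: "\<And>n x. g (Suc L) n (gi (g (Suc L) n) x) = x" using ggi[of "L+1"] by simp
  define H where "H n = gi (g l (r n)) o\<^sub>L g (L+1) (r n)" for n
  define K where "K n = gi (g (L+1) (r n)) o\<^sub>L g l (r n)" for n
  have HG: "H n \<in> G" for n unfolding H_def using comp giG gG lL1 by simp
  have KG: "K n \<in> G" for n unfolding K_def using comp giG gG lL1 by simp
  have KH: "K n (H n x) = x" for n x unfolding H_def K_def by (simp add: ggil gigL gigS)
  have HK: "H n (K n x) = x" for n x unfolding H_def K_def by (simp add: gigl ggiL ggiS)
  have Happ: "(\<lambda>n. op_inv (g l (r n)) \<circ> blinfun_apply (g (L + 1) (r n))) = (\<lambda>n. blinfun_apply (H n))"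
    unfolding H_def using opi[OF lL1] by (auto simp: fun_eq_iff)
  show "op_weak_conv (\<lambda>n. op_inv (g l (r n)) \<circ> blinfun_apply (g (L + 1) (r n))) (\<lambda>_. 0)"
    unfolding Happ
  proof (rule ccontr)
    assume nH: "\<not> op_weak_conv (\<lambda>n. blinfun_apply (H n)) (\<lambda>_. 0)"
    have nK: "\<not> op_weak_conv (\<lambda>n. blinfun_apply (K n)) (\<lambda>_. 0)"
      using inv_lemma[OF ds, where gs=K and hs=H] KG HG KH nH by blast
    define v where "v n = gi (g l (r n)) (u (r n) - (\<Sum>m\<le>L. g m (r n) (w m)))" for n
    have veq: "v n = gi (g l (r n)) (u (r n)) - (\<Sum>m\<le>L. gi (g l (r n)) (g m (r n) (w m)))" for n
      unfolding v_def by (simp add: blinfun.diff_right blinfun.sum_right)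
    have v1: "weak_conv (\<lambda>n. gi (g l (r n)) (u (r n))) (w l)"
      using wc_subseq[OF assms(6)[OF lL] assms(8)] opi[OF lL1] by simp
    have v2: "weak_conv (\<lambda>n. gi (g l (r n)) (g m (r n) (w m))) (if m = l then w l else 0)"
      if mL: "m \<in> {..L}" for m
    proof -
      have mL1: "m \<le> L + 1" using mL by simp
      consider "m = l" | "l < m" | "m < l" by linarith
      then show ?thesis
      proof cases
        case 1 then show ?thesis using gigl wc_const by simp
      next
        case 2
        have "op_weak_conv (\<lambda>n. op_inv (g l n) \<circ> blinfun_apply (g m n)) (\<lambda>_. 0)"
          using assms(7)[OF 2] mL by simp
        then have "weak_conv (\<lambda>n. gi (g l n) (g m n (w m))) 0"
          unfolding op_weak_conv_def using opi[OF lL1] by simp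
        then show ?thesis using wc_subseq[OF _ assms(8)] 2 by simp
      next
        case 3
        define gs where "gs n = gi (g m n) o\<^sub>L g l n" for n
        define hs where "hs n = gi (g l n) o\<^sub>L g m n" for n
        have "op_weak_conv (\<lambda>n. op_inv (g m n) \<circ> blinfun_apply (g l n)) (\<lambda>_. 0)"
          using assms(7)[OF 3 lL] .
        moreover have "(\<lambda>n. op_inv (g m n) \<circ> blinfun_apply (g l n)) = (\<lambda>n. blinfun_apply (gs n))"
          unfolding gs_def using opi[OF mL1] by (auto simp: fun_eq_iff)
        ultimately have wg: "op_weak_conv (\<lambda>n. blinfun_apply (gs n)) (\<lambda>_. 0)" by simp
        have "op_weak_conv (\<lambda>n. blinfun_apply (hs n)) (\<lambda>_. 0)"
        proof (rule inv_lemma[OF ds _ _ _ wg])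
          show "gs n \<in> G" for n unfolding gs_def using comp giG gG mL1 lL1 by simp
          show "hs n \<in> G" for n unfolding hs_def using comp giG gG mL1 lL1 by simp
          show "gs n (hs n x) = x" for n x unfolding gs_def hs_def by (simp add: ggil gig[OF mL1])
        qed
        then have "weak_conv (\<lambda>n. gi (g l n) (g m n (w m))) 0"
          unfolding op_weak_conv_def hs_def by simp
        then show ?thesis using wc_subseq[OF _ assms(8)] 3 by simp
      qed
    qed
    have "weak_conv (\<lambda>n. \<Sum>m\<le>L. gi (g l (r n)) (g m (r n) (w m))) (\<Sum>m\<le>L. if m = l then w l else 0)"
      by (rule wc_sum) (use v2 in auto)
    moreover have "(\<Sum>m\<le>L. if m = l then w l else 0) = w l" using lL by simp
    ultimately have S: "weak_conv (\<lambda>n. \<Sum>m\<le>L. gi (g l (r n)) (g m (r n) (w m))) (w l)" by simp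
    have "weak_conv v (w l - w l)" unfolding veq by (rule wc_diff[OF v1 S])
    then have v0: "weak_conv v 0" by simp
    have p2: "\<forall>gs us. (\<forall>n. gs n \<in> G) \<and> \<not> op_weak_conv (\<lambda>n. blinfun_apply (gs n)) (\<lambda>_. 0)
        \<and> weak_conv us 0 \<longrightarrow> (\<exists>r. strict_mono r \<and> weak_conv (\<lambda>n. gs (r n) (us (r n))) 0)"
      using ds unfolding dislocation_space_def by blast
    obtain q where q: "strict_mono q" and wq: "weak_conv (\<lambda>n. K (q n) (v (q n))) 0"
      using p2 KG nK v0 by blast
    have Kv: "K n (v n) = op_inv (g (L + 1) (r n)) (u (r n) - (\<Sum>l\<le>L. g l (r n) (w l)))" for n
      unfolding K_def v_def using opi[of "L+1"] by (simp add: ggil)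
    have "weak_conv (\<lambda>n. K (q n) (v (q n))) (w (L+1))"
      unfolding Kv using wc_subseq[OF assms(9) q] .
    then have "w (L+1) = 0" using wc_unique wq by blast
    then show False using assms(10) by blast
  qed
qed

end
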